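(* Let $\Gamma=\operatorname{HNN}(G,H,\theta)$ be a non-ascending HNN extension. Then the normal closures in $\Gamma$ of the two quasi-kernels $K_{-1}$ and $K_1$ coincide.
   Context: Let $G$ be a group, $H\le G$ a subgroup and $\theta:H\to G$ an injective homomorphism; $\Gamma=\operatorname{HNN}(G,H,\theta)=\langle G,\tau\mid \tau^{-1}h\tau=\theta(h)\ (h\in H)\rangle$. Set $H_{-1}=H$, $H_1=\theta(H)$. The extension is non-ascending if $H\neq G$ and $\theta(H)\neq G$. Fix sets $S_{-1},S_1$ of representatives of the left cosets of $H_{-1}$, resp. $H_1$, in $G$ with $1\in S_{-1}\cap S_1$. Every $g\in\Gamma$ has a unique normal form $g=g_1\tau^{\varepsilon_1}g_2\tau^{\varepsilon_2}\cdots g_n\tau^{\varepsilon_n}g_{n+1}$ with $n\ge0$, $\varepsilon_i\in\{\pm1\}$, $g_i\in S_{-\varepsilon_i}$ for $1\le i\le n$, $g_{n+1}\in G$, and $g_i=1\Rightarrow\varepsilon_{i-1}=\varepsilon_i$ for $2\le i\le n$. Then $n$ is the length of $g$; if $n\ge1$, $\varepsilon_1$ is the type and $g_1$ the initial letter of $g$. For $\varepsilon\in\{\pm1\}$, $T_\varepsilon$ is the set of elements of length $\ge1$ and type $\varepsilon$, and $T_\varepsilon^\dagger\subseteq T_\varepsilon$ the subset of those with initial letter $1$. The quasi-kernels are $K_\varepsilon=\bigcap_{r\in\Gamma\setminus T_\varepsilon^\dagger} rHr^{-1}$. *)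

theory Defs
  imports "HOL-Algebra.Algebra"
begin

text \<open>Letters: Inl g stands for g in G, Inr True for the stable letter tau,
  Inr False for tau inverse.\<close>

type_synonym 'a hnn_letter = "'a + bool"

definition hnn_words :: "('a, 'm) monoid_scheme \<Rightarrow> 'a hnn_letter list set" where
  "hnn_words G = lists (Inl ` carrier G \<union> {Inr True, Inr False})"

inductive hnn_step ::
  "('a, 'm) monoid_scheme \<Rightarrow> 'a set \<Rightarrow> ('a \<Rightarrow> 'a) \<Rightarrow> 'a hnn_letter list \<Rightarrow> 'a hnn_letter list \<Rightarrow> bool"
  for G H \<theta> where
  mult: "\<lbrakk>u \<in> hnn_words G; v \<in> hnn_words G; g \<in> carrier G; g' \<in> carrier G\<rbrakk>
     \<Longrightarrow> hnn_step G H \<theta> (u @ [Inl g, Inl g'] @ v) (u @ [Inl (g \<otimes>\<^bsub>G\<^esub> g')] @ v)"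
| one: "\<lbrakk>u \<in> hnn_words G; v \<in> hnn_words G\<rbrakk>
     \<Longrightarrow> hnn_step G H \<theta> (u @ [Inl \<one>\<^bsub>G\<^esub>] @ v) (u @ v)"
| tau_inv: "\<lbrakk>u \<in> hnn_words G; v \<in> hnn_words G\<rbrakk>
     \<Longrightarrow> hnn_step G H \<theta> (u @ [Inr True, Inr False] @ v) (u @ v)"
| inv_tau: "\<lbrakk>u \<in> hnn_words G; v \<in> hnn_words G\<rbrakk>
     \<Longrightarrow> hnn_step G H \<theta> (u @ [Inr False, Inr True] @ v) (u @ v)"
| conj: "\<lbrakk>u \<in> hnn_words G; v \<in> hnn_words G; h \<in> H\<rbrakk>
     \<Longrightarrow> hnn_step G H \<theta> (u @ [Inr False, Inl h, Inr True] @ v) (u @ [Inl (\<theta> h)] @ v)"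

definition hnn_eq ::
  "('a, 'm) monoid_scheme \<Rightarrow> 'a set \<Rightarrow> ('a \<Rightarrow> 'a) \<Rightarrow> 'a hnn_letter list \<Rightarrow> 'a hnn_letter list \<Rightarrow> bool" where
  "hnn_eq G H \<theta> x y \<longleftrightarrow> x \<in> hnn_words G \<and> (symclp (hnn_step G H \<theta>))\<^sup>*\<^sup>* x y"

definition hnn_cls ::
  "('a, 'm) monoid_scheme \<Rightarrow> 'a set \<Rightarrow> ('a \<Rightarrow> 'a) \<Rightarrow> 'a hnn_letter list \<Rightarrow> 'a hnn_letter list set" where
  "hnn_cls G H \<theta> w = {w'. hnn_eq G H \<theta> w w'}"

definition HNN ::
  "('a, 'm) monoid_scheme \<Rightarrow> 'a set \<Rightarrow> ('a \<Rightarrow> 'a) \<Rightarrow> 'a hnn_letter list set monoid" where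
  "HNN G H \<theta> =
     \<lparr>carrier = hnn_cls G H \<theta> ` hnn_words G,
      monoid.mult = (\<lambda>A B. {w. \<exists>a\<in>A. \<exists>b\<in>B. hnn_eq G H \<theta> (a @ b) w}),
      monoid.one = hnn_cls G H \<theta> []\<rparr>"

definition hnn_emb :: "('a, 'm) monoid_scheme \<Rightarrow> 'a set \<Rightarrow> ('a \<Rightarrow> 'a) \<Rightarrow> 'a \<Rightarrow> 'a hnn_letter list set" where
  "hnn_emb G H \<theta> g = hnn_cls G H \<theta> [Inl g]"

definition hnn_tau :: "('a, 'm) monoid_scheme \<Rightarrow> 'a set \<Rightarrow> ('a \<Rightarrow> 'a) \<Rightarrow> 'a hnn_letter list set" where
  "hnn_tau G H \<theta> = hnn_cls G H \<theta> [Inr True]"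

definition hnn_tau_pow :: "('a, 'm) monoid_scheme \<Rightarrow> 'a set \<Rightarrow> ('a \<Rightarrow> 'a) \<Rightarrow> int \<Rightarrow> 'a hnn_letter list set" where
  "hnn_tau_pow G H \<theta> e = (if e = 1 then hnn_tau G H \<theta> else inv\<^bsub>HNN G H \<theta>\<^esub> (hnn_tau G H \<theta>))"

definition non_ascending :: "('a, 'm) monoid_scheme \<Rightarrow> 'a set \<Rightarrow> ('a \<Rightarrow> 'a) \<Rightarrow> bool" where
  "non_ascending G H \<theta> \<longleftrightarrow> H \<noteq> carrier G \<and> \<theta> ` H \<noteq> carrier G"

definition left_transversal :: "('a, 'm) monoid_scheme \<Rightarrow> 'a set \<Rightarrow> 'a set \<Rightarrow> bool" where
  "left_transversal G K S \<longleftrightarrow> S \<subseteq> carrier G \<and> (\<forall>g\<in>carrier G. \<exists>!s\<in>S. g \<in> s <#\<^bsub>G\<^esub> K)"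

definition hnn_H :: "'a set \<Rightarrow> ('a \<Rightarrow> 'a) \<Rightarrow> int \<Rightarrow> 'a set" where
  "hnn_H H \<theta> e = (if e = -1 then H else \<theta> ` H)"

text \<open>A normal form g_1 tau^e_1 ... g_n tau^e_n g_{n+1} is represented by the list
  [(g_1,e_1),...,(g_n,e_n)] together with g_{n+1}.  S (-1), S 1 are the chosen
  transversals S_{-1}, S_1.\<close>
definition nf_valid :: "('a, 'm) monoid_scheme \<Rightarrow> (int \<Rightarrow> 'a set) \<Rightarrow> ('a \<times> int) list \<times> 'a \<Rightarrow> bool" where
  "nf_valid G S nf \<longleftrightarrow>
     (let ps = fst nf; g = snd nf in
       (\<forall>i<length ps. snd (ps ! i) \<in> {-1, 1} \<and> fst (ps ! i) \<in> S (- snd (ps ! i)))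
     \<and> g \<in> carrier G
     \<and> (\<forall>i. 0 < i \<and> i < length ps \<longrightarrow> fst (ps ! i) = \<one>\<^bsub>G\<^esub> \<longrightarrow> snd (ps ! (i - 1)) = snd (ps ! i)))"

definition nf_eval :: "('a, 'm) monoid_scheme \<Rightarrow> 'a set \<Rightarrow> ('a \<Rightarrow> 'a) \<Rightarrow> ('a \<times> int) list \<times> 'a \<Rightarrow> 'a hnn_letter list set" where
  "nf_eval G H \<theta> nf =
     foldr (\<lambda>(g, e) acc. hnn_emb G H \<theta> g \<otimes>\<^bsub>HNN G H \<theta>\<^esub> hnn_tau_pow G H \<theta> e \<otimes>\<^bsub>HNN G H \<theta>\<^esub> acc)
       (fst nf) (hnn_emb G H \<theta> (snd nf))"

definition normal_form :: "('a, 'm) monoid_scheme \<Rightarrow> 'a set \<Rightarrow> ('a \<Rightarrow> 'a) \<Rightarrow> (int \<Rightarrow> 'a set)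
    \<Rightarrow> 'a hnn_letter list set \<Rightarrow> ('a \<times> int) list \<times> 'a" where
  "normal_form G H \<theta> S x = (THE nf. nf_valid G S nf \<and> nf_eval G H \<theta> nf = x)"

definition hnn_T :: "('a, 'm) monoid_scheme \<Rightarrow> 'a set \<Rightarrow> ('a \<Rightarrow> 'a) \<Rightarrow> (int \<Rightarrow> 'a set) \<Rightarrow> int
    \<Rightarrow> 'a hnn_letter list set set" where
  "hnn_T G H \<theta> S e = {x \<in> carrier (HNN G H \<theta>).
      fst (normal_form G H \<theta> S x) \<noteq> [] \<and> snd (hd (fst (normal_form G H \<theta> S x))) = e}"

definition hnn_T_dagger :: "('a, 'm) monoid_scheme \<Rightarrow> 'a set \<Rightarrow> ('a \<Rightarrow> 'a) \<Rightarrow> (int \<Rightarrow> 'a set) \<Rightarrow> int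
    \<Rightarrow> 'a hnn_letter list set set" where
  "hnn_T_dagger G H \<theta> S e = {x \<in> hnn_T G H \<theta> S e. fst (hd (fst (normal_form G H \<theta> S x))) = \<one>\<^bsub>G\<^esub>}"

definition conj_set :: "('b, 'n) monoid_scheme \<Rightarrow> 'b \<Rightarrow> 'b set \<Rightarrow> 'b set" where
  "conj_set \<Gamma> r A = {r \<otimes>\<^bsub>\<Gamma>\<^esub> a \<otimes>\<^bsub>\<Gamma>\<^esub> inv\<^bsub>\<Gamma>\<^esub> r | a. a \<in> A}"

definition quasi_kernel :: "('a, 'm) monoid_scheme \<Rightarrow> 'a set \<Rightarrow> ('a \<Rightarrow> 'a) \<Rightarrow> (int \<Rightarrow> 'a set) \<Rightarrow> int
    \<Rightarrow> 'a hnn_letter list set set" where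
  "quasi_kernel G H \<theta> S e =
     (\<Inter>r \<in> carrier (HNN G H \<theta>) - hnn_T_dagger G H \<theta> S e.
        conj_set (HNN G H \<theta>) r (hnn_emb G H \<theta> ` H))"

definition normal_closure :: "('b, 'n) monoid_scheme \<Rightarrow> 'b set \<Rightarrow> 'b set" where
  "normal_closure \<Gamma> A = generate \<Gamma> (\<Union>g \<in> carrier \<Gamma>. conj_set \<Gamma> g A)"

end

theory Submission
  imports Defs
begin

lemma (in group) inv_cancel_l: "x \<in> carrier G \<Longrightarrow> y \<in> carrier G \<Longrightarrow> inv x \<otimes> (x \<otimes> y) = y"
  by (simp add: m_assoc[symmetric])
lemma (in group) inv_cancel_r: "x \<in> carrier G \<Longrightarrow> y \<in> carrier G \<Longrightarrow> x \<otimes> (inv x \<otimes> y) = y"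
  by (simp add: m_assoc[symmetric])

lemma (in group) conj1: "c \<in> carrier G \<Longrightarrow> r \<in> carrier G \<Longrightarrow> u \<in> carrier G \<Longrightarrow>
   inv c \<otimes> ((c \<otimes> r) \<otimes> u \<otimes> inv (c \<otimes> r)) \<otimes> c = r \<otimes> u \<otimes> inv r"
  by (simp add: m_assoc inv_mult_group inv_cancel_l)
lemma (in group) conj2: "c \<in> carrier G \<Longrightarrow> k \<in> carrier G \<Longrightarrow> c \<otimes> (inv c \<otimes> k \<otimes> c) \<otimes> inv c = k"
  by (simp add: m_assoc inv_cancel_r)
lemma (in group) conj3: "g \<in> carrier G \<Longrightarrow> c \<in> carrier G \<Longrightarrow> k \<in> carrier G \<Longrightarrow>
   g \<otimes> (c \<otimes> k \<otimes> inv c) \<otimes> inv g = (g \<otimes> c) \<otimes> k \<otimes> inv (g \<otimes> c)"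
  by (simp add: m_assoc inv_mult_group)

locale hnn_setup = group G for G :: "('a,'m) monoid_scheme" (structure) +
  fixes H :: "'a set" and \<theta> :: "'a \<Rightarrow> 'a" and S :: "int \<Rightarrow> 'a set"
  assumes subH: "subgroup H G"
    and hom\<theta>: "\<theta> \<in> hom (G\<lparr>carrier := H\<rparr>) G"
    and inj\<theta>: "inj_on \<theta> H"
    and nonasc: "non_ascending G H \<theta>"
    and ltm: "left_transversal G (hnn_H H \<theta> (-1)) (S (-1))"
    and ltp: "left_transversal G (hnn_H H \<theta> 1) (S 1)"
    and onem: "\<one>\<^bsub>G\<^esub> \<in> S (-1)" and onep: "\<one>\<^bsub>G\<^esub> \<in> S 1"
begin

lemma H_carr: "H \<subseteq> carrier G" using subgroup.subset[OF subH] .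

lemma th_carr: "h \<in> H \<Longrightarrow> \<theta> h \<in> carrier G"
  using hom\<theta> by (auto simp: hom_def Pi_def)

lemma th_mult: "h \<in> H \<Longrightarrow> h' \<in> H \<Longrightarrow> \<theta> (h \<otimes> h') = \<theta> h \<otimes> \<theta> h'"
  using hom\<theta> by (auto simp: hom_def)

lemma th_one: "\<theta> \<one> = \<one>"
proof -
  have 1: "\<one> \<in> H" using subgroup.one_closed[OF subH] .
  have c: "\<theta> \<one> \<in> carrier G" using th_carr[OF 1] .
  have e: "\<theta> (\<one> \<otimes> \<one>) = \<theta> \<one> \<otimes> \<theta> \<one>" using th_mult[OF 1 1] .
  have o: "\<one> \<otimes> \<one> = \<one>" by simp
  have e': "\<theta> \<one> \<otimes> \<theta> \<one> = \<theta> \<one>" using e unfolding o by (rule sym)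
  have "\<theta> \<one> \<otimes> \<theta> \<one> = \<theta> \<one> \<otimes> \<one>" using e' c by simp
  from l_cancel[OF this c one_closed c] show ?thesis .
qed

lemma th_inv: "h \<in> H \<Longrightarrow> \<theta> (inv h) = inv (\<theta> h)"
proof -
  assume h: "h \<in> H"
  have ih: "inv h \<in> H" using subgroup.m_inv_closed[OF subH h] .
  have hc: "h \<in> carrier G" using h H_carr by blast
  have e1: "\<theta> (inv h) \<otimes> \<theta> h = \<theta> (inv h \<otimes> h)" by (rule th_mult[OF ih h, symmetric])
  have e2: "inv h \<otimes> h = \<one>" by (rule l_inv[OF hc])
  have "\<theta> (inv h) \<otimes> \<theta> h = \<one>" unfolding e1 e2 th_one ..
  from inv_equality[OF this th_carr[OF h] th_carr[OF ih]] show ?thesis by (rule sym)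
qed

lemma thH_sub: "subgroup (\<theta> ` H) G"
proof (rule subgroupI)
  show "\<theta> ` H \<subseteq> carrier G" using th_carr by auto
  show "\<theta> ` H \<noteq> {}" using subgroup.one_closed[OF subH] by blast
  show "inv a \<in> \<theta> ` H" if aa: "a \<in> \<theta> ` H" for a
  proof -
    obtain h where h: "h \<in> H" "a = \<theta> h" using aa by blast
    have "inv h \<in> H" using subgroup.m_inv_closed[OF subH h(1)] .
    thus ?thesis unfolding h(2) th_inv[OF h(1), symmetric] by (rule imageI)
  qed
  show "a \<otimes> b \<in> \<theta> ` H" if aa: "a \<in> \<theta> ` H" "b \<in> \<theta> ` H" for a b
  proof -
    obtain h h' where h: "h \<in> H" "a = \<theta> h" "h' \<in> H" "b = \<theta> h'" using aa by blast
    have "h \<otimes> h' \<in> H" using subgroup.m_closed[OF subH h(1) h(3)] .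
    thus ?thesis unfolding h(2) h(4) th_mult[OF h(1) h(3), symmetric] by (rule imageI)
  qed
qed

abbreviation HH where "HH j \<equiv> hnn_H H \<theta> j"

lemma HH_sub: "j \<in> {-1,1} \<Longrightarrow> subgroup (HH j) G"
  using subH thH_sub by (auto simp: hnn_H_def)

lemma HH_carr: "j \<in> {-1,1} \<Longrightarrow> x \<in> HH j \<Longrightarrow> x \<in> carrier G"
  using subgroup.mem_carrier[OF HH_sub] by blast

lemma lt: "j \<in> {-1,1} \<Longrightarrow> left_transversal G (HH j) (S j)"
  using ltm ltp by auto

lemma oneS: "j \<in> {-1,1} \<Longrightarrow> \<one> \<in> S j"
  using onem onep by auto

lemma S_carr: "j \<in> {-1,1} \<Longrightarrow> s \<in> S j \<Longrightarrow> s \<in> carrier G"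
proof -
  assume j: "j \<in> {-1,1}" and s: "s \<in> S j"
  have "S j \<subseteq> carrier G" using lt[OF j] unfolding left_transversal_def by (rule conjunct1)
  thus ?thesis using s by blast
qed

definition rep :: "int \<Rightarrow> 'a \<Rightarrow> 'a" where
  "rep j y = (THE s. s \<in> S j \<and> y \<in> s <# HH j)"

definition hp :: "int \<Rightarrow> 'a \<Rightarrow> 'a" where
  "hp j y = inv (rep j y) \<otimes> y"

definition phi :: "int \<Rightarrow> 'a \<Rightarrow> 'a" where
  "phi e x = (if e = 1 then \<theta> x else inv_into H \<theta> x)"

lemma rep_ex: assumes "j \<in> {-1,1}" "y \<in> carrier G"
  shows "rep j y \<in> S j \<and> y \<in> rep j y <# HH j"
proof -
  have "\<exists>!s. s \<in> S j \<and> y \<in> s <# HH j" using lt[OF assms(1)] assms(2)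
    unfolding left_transversal_def by (elim conjE) (rule bspec)
  thus ?thesis unfolding rep_def by (rule theI')
qed

lemma rep_uniq: assumes "j \<in> {-1,1}" "y \<in> carrier G" "s \<in> S j" "y \<in> s <# HH j"
  shows "rep j y = s"
proof -
  have "\<exists>!s. s \<in> S j \<and> y \<in> s <# HH j" using lt[OF assms(1)] assms(2)
    unfolding left_transversal_def by (elim conjE) (rule bspec)
  from this conjI[OF assms(3) assms(4)] show ?thesis unfolding rep_def by (rule the1_equality)
qed

lemma rep_carr: "j \<in> {-1,1} \<Longrightarrow> y \<in> carrier G \<Longrightarrow> rep j y \<in> carrier G"
  using rep_ex S_carr by blast

lemma hp_H: assumes "j \<in> {-1,1}" "y \<in> carrier G"
  shows "hp j y \<in> HH j" and "rep j y \<otimes> hp j y = y"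
proof -
  obtain k where k: "k \<in> HH j" "y = rep j y \<otimes> k"
    using rep_ex[OF assms] unfolding l_coset_def by blast
  have r: "rep j y \<in> carrier G" using rep_carr assms by blast
  have kc: "k \<in> carrier G" using HH_carr assms k by blast
  have "hp j y = k" unfolding hp_def using inv_solve_left[OF kc r assms(2)] k(2) by simp
  thus "hp j y \<in> HH j" "rep j y \<otimes> hp j y = y" using k by auto
qed

lemma hp_carr: "j \<in> {-1,1} \<Longrightarrow> y \<in> carrier G \<Longrightarrow> hp j y \<in> carrier G"
  using hp_H HH_carr by blast

lemma rep_sk: assumes "j \<in> {-1,1}" "s \<in> S j" "k \<in> HH j"
  shows "rep j (s \<otimes> k) = s" "hp j (s \<otimes> k) = k"
proof -
  have sc: "s \<in> carrier G" and kc: "k \<in> carrier G" using assms S_carr HH_carr by auto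
  show r: "rep j (s \<otimes> k) = s"
    using assms sc kc by (intro rep_uniq) (auto simp: l_coset_def)
  show "hp j (s \<otimes> k) = k" unfolding hp_def r using sc kc by (simp add: m_assoc[symmetric])
qed

lemma rep_S: "j \<in> {-1,1} \<Longrightarrow> s \<in> S j \<Longrightarrow> rep j s = s \<and> hp j s = \<one>"
  using rep_sk[of j s \<one>] HH_sub[of j] subgroup.one_closed[of "HH j" G] S_carr[of j s] by simp

lemma rep_one_iff: assumes "j \<in> {-1,1}" "y \<in> carrier G"
  shows "rep j y = \<one> \<longleftrightarrow> y \<in> HH j"
proof
  assume "rep j y = \<one>" thus "y \<in> HH j" using hp_H[OF assms] hp_carr[OF assms] by simp
next
  assume "y \<in> HH j" thus "rep j y = \<one>" using rep_sk(1)[OF assms(1) oneS[OF assms(1)], of y] assms HH_carr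
    by simp
qed

lemma phi_H: assumes "e \<in> {-1,1}" "x \<in> HH (-e)" shows "phi e x \<in> HH e"
  using assms by (auto simp: phi_def hnn_H_def inv_into_f_f[OF inj\<theta>])

lemma phi_carr: "e \<in> {-1,1} \<Longrightarrow> x \<in> HH (-e) \<Longrightarrow> phi e x \<in> carrier G"
  using phi_H HH_carr by blast

lemma phi_mult: assumes "e \<in> {-1,1}" "x \<in> HH (-e)" "y \<in> HH (-e)"
  shows "phi e (x \<otimes> y) = phi e x \<otimes> phi e y"
proof (cases "e = 1")
  case True thus ?thesis using assms th_mult by (auto simp: phi_def hnn_H_def)
next
  case False
  then obtain a b where ab: "a \<in> H" "b \<in> H" "x = \<theta> a" "y = \<theta> b" using assms by (auto simp: hnn_H_def)
  have ab2: "a \<otimes> b \<in> H" using subgroup.m_closed[OF subH ab(1) ab(2)] .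
  have "x \<otimes> y = \<theta> (a \<otimes> b)" using ab th_mult[OF ab(1) ab(2)] by simp
  thus ?thesis using False ab inv_into_f_f[OF inj\<theta> ab2] inv_into_f_f[OF inj\<theta> ab(1)] inv_into_f_f[OF inj\<theta> ab(2)]
    by (simp add: phi_def)
qed

lemma phi_one: "phi e \<one> = \<one>"
proof -
  have 1: "\<one> \<in> H" using subgroup.one_closed[OF subH] .
  show ?thesis using th_one inv_into_f_f[OF inj\<theta> 1] by (simp add: phi_def)
qed


lemma rep_S_H: "j \<in> {-1,1} \<Longrightarrow> s \<in> S j \<Longrightarrow> s \<in> HH j \<Longrightarrow> s = \<one>"
  using rep_S rep_one_iff S_carr by metis

primrec actl :: "('a \<times> int) list \<Rightarrow> 'a \<Rightarrow> 'a \<Rightarrow> ('a \<times> int) list \<times> 'a" where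
  "actl [] x g = ([], x \<otimes> g)"
| "actl (p # rest) x g =
    ((rep (- snd p) (x \<otimes> fst p), snd p) # fst (actl rest (phi (snd p) (hp (- snd p) (x \<otimes> fst p))) g),
     snd (actl rest (phi (snd p) (hp (- snd p) (x \<otimes> fst p))) g))"

primrec vl :: "('a \<times> int) list \<Rightarrow> bool" where
  "vl [] = True"
| "vl (p # rest) = (snd p \<in> {-1,1} \<and> fst p \<in> S (- snd p) \<and> vl rest \<and>
      (rest \<noteq> [] \<longrightarrow> fst (hd rest) = \<one> \<longrightarrow> snd p = snd (hd rest)))"

lemma act_valid: "vl ps \<Longrightarrow> g \<in> carrier G \<Longrightarrow> x \<in> carrier G \<Longrightarrow>
   vl (fst (actl ps x g)) \<and> snd (actl ps x g) \<in> carrier G \<and> map snd (fst (actl ps x g)) = map snd ps"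
proof (induction ps arbitrary: x)
  case Nil thus ?case by simp
next
  case (Cons p rest)
  obtain g1 e1 where p: "p = (g1,e1)" by (cases p)
  have e1: "e1 \<in> {-1,1}" and g1S: "g1 \<in> S(-e1)" and vr: "vl rest"
    and red: "rest \<noteq> [] \<longrightarrow> fst (hd rest) = \<one> \<longrightarrow> e1 = snd (hd rest)" using Cons.prems(1) p by auto
  have me1: "-e1 \<in> {-1,1}" using e1 by auto
  have g1c: "g1 \<in> carrier G" using S_carr[OF me1 g1S] .
  define y where "y = x \<otimes> g1"
  have yc: "y \<in> carrier G" using Cons.prems g1c y_def by simp
  define x' where "x' = phi e1 (hp (-e1) y)"
  have x'H: "x' \<in> HH e1" unfolding x'_def using phi_H[OF e1] hp_H(1)[OF me1 yc] by simp
  have x'c: "x' \<in> carrier G" using HH_carr[OF e1 x'H] .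
  note IH = Cons.IH[OF vr Cons.prems(2) x'c]
  have act: "actl (p#rest) x g = ((rep (-e1) y, e1) # fst (actl rest x' g), snd (actl rest x' g))"
    by (simp add: p y_def x'_def)
  have repS: "rep (-e1) y \<in> S(-e1)" using rep_ex[OF me1 yc] by blast
  have redn: "fst (actl rest x' g) \<noteq> [] \<longrightarrow> fst (hd (fst (actl rest x' g))) = \<one> \<longrightarrow> e1 = snd (hd (fst (actl rest x' g)))"
  proof (cases rest)
    case Nil thus ?thesis by simp
  next
    case (Cons q rr)
    obtain g2 e2 where q: "q = (g2,e2)" by (cases q)
    have e2: "e2 \<in> {-1,1}" and g2S: "g2 \<in> S(-e2)" using vr Cons q by auto
    have me2: "-e2 \<in> {-1,1}" using e2 by auto
    have g2c: "g2 \<in> carrier G" using S_carr[OF me2 g2S] .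
    have hd: "hd (fst (actl rest x' g)) = (rep (-e2) (x' \<otimes> g2), e2)" using Cons q by simp
    show ?thesis
    proof (intro impI)
      assume "fst (hd (fst (actl rest x' g))) = \<one>"
      hence r1: "rep (-e2) (x' \<otimes> g2) = \<one>" using hd by simp
      have xg: "x' \<otimes> g2 \<in> HH (-e2)" using rep_one_iff[OF me2] r1 x'c g2c by simp
      show "e1 = snd (hd (fst (actl rest x' g)))"
      proof (rule ccontr)
        assume "e1 \<noteq> snd (hd (fst (actl rest x' g)))" hence ne: "e1 \<noteq> e2" using hd by simp
        hence me: "-e2 = e1" using e1 e2 by auto
        hence xH: "x' \<otimes> g2 \<in> HH e1" using xg by simp
        have "g2 = inv x' \<otimes> (x' \<otimes> g2)" using inv_solve_left[OF g2c x'c m_closed[OF x'c g2c]] by simp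
        hence "g2 \<in> HH e1" using subgroup.m_closed[OF HH_sub[OF e1] subgroup.m_inv_closed[OF HH_sub[OF e1] x'H] xH] by simp
        hence "g2 \<in> HH (-e2)" using me by simp
        hence "g2 = \<one>" using rep_S_H[OF me2 g2S] by simp
        hence "e1 = e2" using red Cons q by simp
        thus False using ne by simp
      qed
    qed
  qed
  show ?case using act IH repS e1 redn p by simp
qed

lemma act_one: "vl ps \<Longrightarrow> g \<in> carrier G \<Longrightarrow> actl ps \<one> g = (ps, g)"
proof (induction ps)
  case Nil thus ?case by simp
next
  case (Cons p rest)
  obtain g1 e1 where p: "p = (g1,e1)" by (cases p)
  have e1: "e1 \<in> {-1,1}" and g1S: "g1 \<in> S(-e1)" and vr: "vl rest" using Cons.prems(1) p by auto
  have me1: "-e1 \<in> {-1,1}" using e1 by auto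
  have g1c: "g1 \<in> carrier G" using S_carr[OF me1 g1S] .
  have r: "rep (-e1) g1 = g1" "hp (-e1) g1 = \<one>" using rep_S[OF me1 g1S] by auto
  show ?case using Cons.IH[OF vr Cons.prems(2)] p g1c r phi_one by simp
qed

lemma act_comp: "vl ps \<Longrightarrow> g \<in> carrier G \<Longrightarrow> x \<in> carrier G \<Longrightarrow> y \<in> carrier G \<Longrightarrow>
  actl (fst (actl ps y g)) x (snd (actl ps y g)) = actl ps (x \<otimes> y) g"
proof (induction ps arbitrary: x y)
  case Nil thus ?case by (simp add: m_assoc)
next
  case (Cons p rest)
  obtain g1 e1 where p: "p = (g1,e1)" by (cases p)
  have e1: "e1 \<in> {-1,1}" and g1S: "g1 \<in> S(-e1)" and vr: "vl rest" using Cons.prems(1) p by auto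
  have me1: "-e1 \<in> {-1,1}" using e1 by auto
  have g1c: "g1 \<in> carrier G" using S_carr[OF me1 g1S] .
  define z where "z = y \<otimes> g1"
  have zc: "z \<in> carrier G" using z_def Cons.prems g1c by simp
  define s where "s = rep (-e1) z"
  define h where "h = hp (-e1) z"
  have sS: "s \<in> S (-e1)" using rep_ex[OF me1 zc] s_def by blast
  have sc: "s \<in> carrier G" using S_carr[OF me1 sS] .
  have hH: "h \<in> HH (-e1)" using hp_H(1)[OF me1 zc] h_def by simp
  have hc: "h \<in> carrier G" using HH_carr[OF me1 hH] .
  have zsh: "s \<otimes> h = z" using hp_H(2)[OF me1 zc] s_def h_def by simp
  define w where "w = x \<otimes> s"
  have wc: "w \<in> carrier G" using w_def Cons.prems sc by simp
  define s' where "s' = rep (-e1) w"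
  define h' where "h' = hp (-e1) w"
  have s'S: "s' \<in> S (-e1)" using rep_ex[OF me1 wc] s'_def by blast
  have s'c: "s' \<in> carrier G" using S_carr[OF me1 s'S] .
  have h'H: "h' \<in> HH (-e1)" using hp_H(1)[OF me1 wc] h'_def by simp
  have h'c: "h' \<in> carrier G" using HH_carr[OF me1 h'H] .
  have wsh: "s' \<otimes> h' = w" using hp_H(2)[OF me1 wc] s'_def h'_def by simp
  have hh: "h' \<otimes> h \<in> HH (-e1)" using subgroup.m_closed[OF HH_sub[OF me1] h'H hH] .
  have eq: "(x \<otimes> y) \<otimes> g1 = s' \<otimes> (h' \<otimes> h)"
  proof -
    have "(x \<otimes> y) \<otimes> g1 = x \<otimes> z" using z_def Cons.prems g1c by (simp add: m_assoc)
    also have "\<dots> = (x \<otimes> s) \<otimes> h" using zsh Cons.prems sc hc by (simp add: m_assoc)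
    also have "\<dots> = (s' \<otimes> h') \<otimes> h" using wsh w_def by simp
    also have "\<dots> = s' \<otimes> (h' \<otimes> h)" using s'c h'c hc by (simp add: m_assoc)
    finally show ?thesis .
  qed
  have R: "rep (-e1) ((x \<otimes> y) \<otimes> g1) = s'" "hp (-e1) ((x \<otimes> y) \<otimes> g1) = h' \<otimes> h"
    unfolding eq using rep_sk[OF me1 s'S hh] by auto
  have ph: "phi e1 (h' \<otimes> h) = phi e1 h' \<otimes> phi e1 h" using phi_mult[OF e1 h'H hH] .
  have pc: "phi e1 h \<in> carrier G" "phi e1 h' \<in> carrier G" using phi_carr[OF e1] hH h'H by auto
  have lhs1: "actl (p # rest) y g = ((s, e1) # fst (actl rest (phi e1 h) g), snd (actl rest (phi e1 h) g))"
    by (simp add: p s_def h_def z_def)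
  have lhs2: "actl ((s, e1) # fst (actl rest (phi e1 h) g)) x (snd (actl rest (phi e1 h) g)) =
     ((s', e1) # fst (actl (fst (actl rest (phi e1 h) g)) (phi e1 h') (snd (actl rest (phi e1 h) g))),
      snd (actl (fst (actl rest (phi e1 h) g)) (phi e1 h') (snd (actl rest (phi e1 h) g))))"
    by (simp add: s'_def h'_def w_def)
  have IH: "actl (fst (actl rest (phi e1 h) g)) (phi e1 h') (snd (actl rest (phi e1 h) g)) = actl rest (phi e1 h' \<otimes> phi e1 h) g"
    using Cons.IH[OF vr Cons.prems(2) pc(2) pc(1)] .
  have rhs: "actl (p # rest) (x \<otimes> y) g = ((s', e1) # fst (actl rest (phi e1 (h' \<otimes> h)) g), snd (actl rest (phi e1 (h' \<otimes> h)) g))"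
    using R by (simp add: p)
  show ?case by (simp only: lhs1 fst_conv snd_conv lhs2 IH rhs ph)
qed

definition tact :: "int \<Rightarrow> ('a \<times> int) list \<times> 'a \<Rightarrow> ('a \<times> int) list \<times> 'a" where
  "tact e nf = (if fst nf \<noteq> [] \<and> fst (hd (fst nf)) = \<one> \<and> snd (hd (fst nf)) = -e
      then (tl (fst nf), snd nf) else ((\<one>, e) # fst nf, snd nf))"

lemma tact_valid: "e \<in> {-1,1} \<Longrightarrow> vl ps \<Longrightarrow> vl (fst (tact e (ps,g))) \<and> snd (tact e (ps,g)) = g"
proof (cases ps)
  case Nil
  assume "e \<in> {-1,1}" thus ?thesis using Nil oneS[of "-e"] by (auto simp: tact_def)
next
  case (Cons q r)
  assume e: "e \<in> {-1,1}" and v: "vl ps"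
  obtain g2 e2 where q: "q = (g2,e2)" by (cases q)
  have e2: "e2 \<in> {-1,1}" using v Cons q by auto
  have o: "\<one> \<in> S (-e)" using oneS[of "-e"] e by auto
  show ?thesis using v Cons q e e2 o by (auto simp: tact_def)
qed

lemma tact_inv: "e \<in> {-1,1} \<Longrightarrow> vl ps \<Longrightarrow> tact e (tact (-e) (ps,g)) = (ps,g)"
proof (cases ps)
  case Nil
  assume "e \<in> {-1,1}" thus ?thesis using Nil by (auto simp: tact_def)
next
  case (Cons q r)
  assume e: "e \<in> {-1,1}" and v: "vl ps"
  obtain g2 e2 where q: "q = (g2,e2)" by (cases q)
  show ?thesis
  proof (cases "g2 = \<one> \<and> e2 = e")
    case True
    have t1: "tact (-e) (ps,g) = (r,g)" using True Cons q by (simp add: tact_def)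
    show ?thesis
    proof (cases r)
      case Nil thus ?thesis using t1 True Cons q by (simp add: tact_def)
    next
      case (Cons q' r')
      obtain g3 e3 where q': "q' = (g3,e3)" by (cases q')
      have "g3 = \<one> \<longrightarrow> e3 = e" using v \<open>ps = q # r\<close> q True Cons q' by auto
      hence "\<not> (g3 = \<one> \<and> e3 = -e)" using e by auto
      thus ?thesis using t1 True \<open>ps = q # r\<close> q Cons q' by (simp add: tact_def)
    qed
  next
    case False
    thus ?thesis using Cons q by (auto simp: tact_def)
  qed
qed

definition actn :: "'a \<Rightarrow> ('a \<times> int) list \<times> 'a \<Rightarrow> ('a \<times> int) list \<times> 'a" where
  "actn x nf = actl (fst nf) x (snd nf)"

lemma tact_conj: assumes h: "h \<in> H" and v: "vl ps" and g: "g \<in> carrier G"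
  shows "tact (-1) (actn h (tact 1 (ps,g))) = actn (\<theta> h) (ps,g)"
proof -
  have hc: "h \<in> carrier G" using h H_carr by blast
  have thc: "\<theta> h \<in> carrier G" using th_carr[OF h] .
  have m1: "(-1::int) \<in> {-1,1}" "(1::int) \<in> {-1,1}" by auto
  show ?thesis
  proof (cases "ps \<noteq> [] \<and> fst (hd ps) = \<one> \<and> snd (hd ps) = -1")
    case True
    then obtain rest where ps: "ps = (\<one>, -1) # rest" by (cases ps) auto
    have t1: "tact 1 (ps,g) = (rest, g)" using ps by (simp add: tact_def)
    have thH: "\<theta> h \<in> HH 1" using h by (simp add: hnn_H_def)
    have r1: "rep 1 (\<theta> h) = \<one>" using rep_one_iff[OF m1(2) thc] thH by simp
    have hp1: "hp 1 (\<theta> h) = \<theta> h" unfolding hp_def r1 using thc by simp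
    have ph: "phi (-1) (\<theta> h) = h" using inv_into_f_f[OF inj\<theta> h] by (simp add: phi_def)
    have rhs: "actn (\<theta> h) (ps,g) = ((\<one>, -1) # fst (actl rest h g), snd (actl rest h g))"
      using ps r1 hp1 ph thc by (simp add: actn_def)
    have nc: "\<not> (fst (actl rest h g) \<noteq> [] \<and> fst (hd (fst (actl rest h g))) = \<one> \<and> snd (hd (fst (actl rest h g))) = 1)"
    proof (cases rest)
      case Nil thus ?thesis by simp
    next
      case (Cons q rr)
      obtain g2 e2 where q: "q = (g2,e2)" by (cases q)
      have e2: "e2 \<in> {-1,1}" and g2S: "g2 \<in> S(-e2)" and red: "g2 = \<one> \<longrightarrow> e2 = -1"
        using v ps Cons q by auto
      have me2: "-e2 \<in> {-1,1}" using e2 by auto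
      have g2c: "g2 \<in> carrier G" using S_carr[OF me2 g2S] .
      show ?thesis
      proof
        assume a: "fst (actl rest h g) \<noteq> [] \<and> fst (hd (fst (actl rest h g))) = \<one> \<and> snd (hd (fst (actl rest h g))) = 1"
        hence e21: "e2 = 1" and r: "rep (-e2) (h \<otimes> g2) = \<one>" using Cons q by auto
        have "h \<otimes> g2 \<in> HH (-1)" using rep_one_iff[OF me2 m_closed[OF hc g2c]] r e21 by simp
        hence hg: "h \<otimes> g2 \<in> H" by (simp add: hnn_H_def)
        have "g2 = inv h \<otimes> (h \<otimes> g2)" using inv_solve_left[OF g2c hc m_closed[OF hc g2c]] by simp
        hence "g2 \<in> H" using subgroup.m_closed[OF subH subgroup.m_inv_closed[OF subH h] hg] by simp
        hence "g2 \<in> HH (-e2)" using e21 by (simp add: hnn_H_def)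
        hence "g2 = \<one>" using rep_S_H[OF me2 g2S] by simp
        thus False using red e21 by simp
      qed
    qed
    have lhs: "tact (-1) (actn h (tact 1 (ps,g))) = ((\<one>, -1) # fst (actl rest h g), snd (actl rest h g))"
      unfolding t1 actn_def using nc by (auto simp add: tact_def)
    show ?thesis using lhs rhs by simp
  next
    case False
    have t1: "tact 1 (ps,g) = ((\<one>, 1) # ps, g)" using False by (auto simp add: tact_def)
    have hH: "h \<in> HH (-1)" using h by (simp add: hnn_H_def)
    have r1: "rep (-1) h = \<one>" using rep_one_iff[OF m1(1) hc] hH by simp
    have hp1: "hp (-1) h = h" unfolding hp_def r1 using hc by simp
    have a: "actn h (tact 1 (ps,g)) = ((\<one>, 1) # fst (actl ps (\<theta> h) g), snd (actl ps (\<theta> h) g))"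
      unfolding t1 actn_def using r1 hp1 hc by (simp add: phi_def)
    show ?thesis unfolding a by (simp add: tact_def actn_def)
  qed
qed


abbreviation W where "W \<equiv> hnn_words G"
abbreviation E where "E \<equiv> hnn_eq G H \<theta>"
abbreviation cls where "cls \<equiv> hnn_cls G H \<theta>"
abbreviation st where "st \<equiv> hnn_step G H \<theta>"

lemma W_Inl[simp]: "Inl x # w \<in> W \<longleftrightarrow> x \<in> carrier G \<and> w \<in> W"
  by (auto simp: hnn_words_def)
lemma W_Inr[simp]: "Inr b # w \<in> W \<longleftrightarrow> w \<in> W"
  by (cases b) (auto simp: hnn_words_def)
lemma W_Nil[simp]: "[] \<in> W" by (simp add: hnn_words_def)
lemma W_app[simp]: "u @ v \<in> W \<longleftrightarrow> u \<in> W \<and> v \<in> W" by (simp add: hnn_words_def)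

definition valid :: "('a \<times> int) list \<times> 'a \<Rightarrow> bool" where
  "valid nf \<longleftrightarrow> vl (fst nf) \<and> snd nf \<in> carrier G"

definition L :: "'a hnn_letter \<Rightarrow> ('a \<times> int) list \<times> 'a \<Rightarrow> ('a \<times> int) list \<times> 'a" where
  "L l nf = (case l of Inl x \<Rightarrow> actn x nf | Inr b \<Rightarrow> tact (if b then 1 else -1) nf)"

definition AW :: "'a hnn_letter list \<Rightarrow> ('a \<times> int) list \<times> 'a \<Rightarrow> ('a \<times> int) list \<times> 'a" where
  "AW w nf = foldr L w nf"

lemma AW_Nil[simp]: "AW [] nf = nf" by (simp add: AW_def)
lemma AW_Cons[simp]: "AW (l # w) nf = L l (AW w nf)" by (simp add: AW_def)
lemma AW_app[simp]: "AW (u @ v) nf = AW u (AW v nf)" by (simp add: AW_def)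

lemma L_valid: "[l] \<in> W \<Longrightarrow> valid nf \<Longrightarrow> valid (L l nf)"
proof (cases l)
  case (Inl x)
  assume "[l] \<in> W" "valid nf"
  thus ?thesis using Inl act_valid[of "fst nf" "snd nf" x] by (simp add: L_def actn_def valid_def)
next
  case (Inr b)
  assume "valid nf"
  have e: "(if b then 1 else -1::int) \<in> {-1,1}" by auto
  thus ?thesis using Inr \<open>valid nf\<close> tact_valid[OF e, of "fst nf" "snd nf"]
    by (simp add: L_def valid_def)
qed

lemma AW_valid: "w \<in> W \<Longrightarrow> valid nf \<Longrightarrow> valid (AW w nf)"
proof (induction w)
  case Nil thus ?case by simp
next
  case (Cons l w)
  have "[l] \<in> W" "w \<in> W" using Cons.prems(1) by (auto simp: hnn_words_def)
  thus ?case using L_valid Cons by simp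
qed

lemma step_AW: "st w w' \<Longrightarrow> valid nf \<Longrightarrow> AW w nf = AW w' nf"
proof (induction rule: hnn_step.induct)
  case (mult u v g g')
  have vn: "valid (AW v nf)" using AW_valid mult by blast
  have "L (Inl g) (L (Inl g') (AW v nf)) = L (Inl (g \<otimes> g')) (AW v nf)"
    using act_comp[of "fst (AW v nf)" "snd (AW v nf)" g g'] vn mult.hyps
    by (simp add: L_def actn_def valid_def)
  thus ?case by simp
next
  case (one u v)
  have vn: "valid (AW v nf)" using AW_valid one by blast
  have "L (Inl \<one>) (AW v nf) = AW v nf"
    using act_one[of "fst (AW v nf)" "snd (AW v nf)"] vn by (simp add: L_def actn_def valid_def)
  thus ?case by simp
next
  case (tau_inv u v)
  have vn: "valid (AW v nf)" using AW_valid tau_inv by blast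
  have "tact 1 (tact (-1) (AW v nf)) = AW v nf"
    using tact_inv[of 1 "fst (AW v nf)" "snd (AW v nf)"] vn by (simp add: valid_def)
  thus ?case by (simp add: L_def)
next
  case (inv_tau u v)
  have vn: "valid (AW v nf)" using AW_valid inv_tau by blast
  have "tact (-1) (tact 1 (AW v nf)) = AW v nf"
    using tact_inv[of "-1" "fst (AW v nf)" "snd (AW v nf)"] vn by (simp add: valid_def)
  thus ?case by (simp add: L_def)
next
  case (conj u v h)
  have vn: "valid (AW v nf)" using AW_valid conj by blast
  have "tact (-1) (actn h (tact 1 (fst (AW v nf), snd (AW v nf)))) = actn (\<theta> h) (fst (AW v nf), snd (AW v nf))"
    using tact_conj[of h "fst (AW v nf)" "snd (AW v nf)"] vn conj.hyps by (simp add: valid_def)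
  thus ?case by (simp add: L_def)
qed

lemma eq_AW: "(symclp st)\<^sup>*\<^sup>* w w' \<Longrightarrow> valid nf \<Longrightarrow> AW w nf = AW w' nf"
proof (induction rule: rtranclp_induct)
  case base thus ?case by simp
next
  case (step y z)
  have "AW y nf = AW z nf" using step(2) step(4) step_AW[of y z nf] step_AW[of z y nf] by (auto simp: symclp_def)
  thus ?case using step by auto
qed

section \<open>Word equivalence\<close>

lemma step_W: "st x y \<Longrightarrow> x \<in> W \<and> y \<in> W"
  by (induction rule: hnn_step.induct) (use H_carr in \<open>auto simp: th_carr\<close>)

lemma rt_W: "(symclp st)\<^sup>*\<^sup>* x y \<Longrightarrow> x \<in> W \<Longrightarrow> y \<in> W"
  by (induction rule: rtranclp_induct) (auto simp: symclp_def dest: step_W)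

lemma rt_sym: "(symclp st)\<^sup>*\<^sup>* x y \<Longrightarrow> (symclp st)\<^sup>*\<^sup>* y x"
proof (induction rule: rtranclp_induct)
  case base thus ?case by simp
next
  case (step y z)
  have "symclp st z y" using step(2) by (auto simp: symclp_def)
  thus ?case using step(3) by (rule converse_rtranclp_into_rtranclp)
qed

lemma E_W: "E x y \<Longrightarrow> x \<in> W \<and> y \<in> W"
proof -
  assume "E x y"
  hence "x \<in> W" "(symclp st)\<^sup>*\<^sup>* x y" unfolding hnn_eq_def by simp_all
  thus ?thesis using rt_W by blast
qed
lemma E_refl: "x \<in> W \<Longrightarrow> E x x" unfolding hnn_eq_def by simp
lemma E_sym: "E x y \<Longrightarrow> E y x"
proof -
  assume e: "E x y"
  hence "(symclp st)\<^sup>*\<^sup>* x y" unfolding hnn_eq_def by simp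
  hence "(symclp st)\<^sup>*\<^sup>* y x" by (rule rt_sym)
  thus ?thesis using E_W[OF e] unfolding hnn_eq_def by simp
qed
lemma E_trans: "E x y \<Longrightarrow> E y z \<Longrightarrow> E x z"
  unfolding hnn_eq_def by (metis rtranclp_trans)
lemma E_step: "st x y \<Longrightarrow> E x y"
proof -
  assume s: "st x y"
  hence "symclp st x y" unfolding symclp_def by simp
  hence "(symclp st)\<^sup>*\<^sup>* x y" by (rule r_into_rtranclp)
  thus ?thesis using step_W[OF s] unfolding hnn_eq_def by simp
qed
lemma E_step': "st x y \<Longrightarrow> E y x" using E_step E_sym by blast

lemma step_cong: "st x y \<Longrightarrow> p \<in> W \<Longrightarrow> q \<in> W \<Longrightarrow> st (p @ x @ q) (p @ y @ q)"
proof (induction rule: hnn_step.induct)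
  case (mult u v g g')
  have "st ((p@u) @ [Inl g, Inl g'] @ (v@q)) ((p@u) @ [Inl (g \<otimes> g')] @ (v@q))"
    using mult by (intro hnn_step.mult) auto
  thus ?case by simp
next
  case (one u v)
  have "st ((p@u) @ [Inl \<one>] @ (v@q)) ((p@u) @ (v@q))"
    using one by (intro hnn_step.one) auto
  thus ?case by simp
next
  case (tau_inv u v)
  have "st ((p@u) @ [Inr True, Inr False] @ (v@q)) ((p@u) @ (v@q))"
    using tau_inv by (intro hnn_step.tau_inv) auto
  thus ?case by simp
next
  case (inv_tau u v)
  have "st ((p@u) @ [Inr False, Inr True] @ (v@q)) ((p@u) @ (v@q))"
    using inv_tau by (intro hnn_step.inv_tau) auto
  thus ?case by simp
next
  case (conj u v h)
  have "st ((p@u) @ [Inr False, Inl h, Inr True] @ (v@q)) ((p@u) @ [Inl (\<theta> h)] @ (v@q))"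
    using conj by (intro hnn_step.conj) auto
  thus ?case by simp
qed

lemma E_cong: "E x y \<Longrightarrow> p \<in> W \<Longrightarrow> q \<in> W \<Longrightarrow> E (p @ x @ q) (p @ y @ q)"
proof -
  assume e: "E x y" and p: "p \<in> W" and q: "q \<in> W"
  have "(symclp st)\<^sup>*\<^sup>* x y" using e unfolding hnn_eq_def by simp
  hence "(symclp st)\<^sup>*\<^sup>* (p @ x @ q) (p @ y @ q)"
  proof (induction rule: rtranclp_induct)
    case base thus ?case by (rule rtranclp.rtrancl_refl)
  next
    case (step y z)
    have "st y z \<or> st z y" using step(2) unfolding symclp_def by simp
    hence "st (p @ y @ q) (p @ z @ q) \<or> st (p @ z @ q) (p @ y @ q)"
      using step_cong[OF _ p q] by blast
    hence "symclp st (p @ y @ q) (p @ z @ q)" unfolding symclp_def by simp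
    with step(3) show ?case by (rule rtranclp.rtrancl_into_rtrancl)
  qed
  moreover have "p @ x @ q \<in> W" using E_W[OF e] p q by simp
  ultimately show ?thesis unfolding hnn_eq_def by simp
qed

lemma E_consL: "E x y \<Longrightarrow> [a] \<in> W \<Longrightarrow> E (a # x) (a # y)"
  using E_cong[of x y "[a]" "[]"] by simp

lemma cls_mem: "z \<in> cls x \<longleftrightarrow> E x z" unfolding hnn_cls_def by simp

lemma cls_eq: "x \<in> W \<Longrightarrow> y \<in> W \<Longrightarrow> cls x = cls y \<longleftrightarrow> E x y"
proof
  assume "x \<in> W" "y \<in> W" "cls x = cls y"
  have "y \<in> cls y" using E_refl[OF \<open>y \<in> W\<close>] cls_mem by simp
  hence "y \<in> cls x" using \<open>cls x = cls y\<close> by simp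
  thus "E x y" using cls_mem by simp
next
  assume e: "E x y"
  show "cls x = cls y"
  proof (rule Set.set_eqI)
    fix z
    have "E x z \<longleftrightarrow> E y z" using E_trans[OF e, of z] E_trans[OF E_sym[OF e], of z] by blast
    thus "z \<in> cls x \<longleftrightarrow> z \<in> cls y" using cls_mem by simp
  qed
qed

lemma mult_cls: "x \<in> W \<Longrightarrow> y \<in> W \<Longrightarrow> cls x \<otimes>\<^bsub>HNN G H \<theta>\<^esub> cls y = cls (x @ y)"
proof -
  assume x: "x \<in> W" and y: "y \<in> W"
  have key: "E (x @ y) (a @ b)" if ea: "E x a" and eb: "E y b" for a b
  proof -
    have aW: "a \<in> W" using E_W[OF ea] by simp
    have 1: "E ([] @ x @ y) ([] @ a @ y)" using E_cong[OF ea W_Nil y] .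
    have 2: "E (a @ y @ []) (a @ b @ [])" using E_cong[OF eb aW W_Nil] .
    show ?thesis using E_trans[OF 1[simplified] 2[simplified]] .
  qed
  have "{w. \<exists>a\<in>cls x. \<exists>b\<in>cls y. E (a @ b) w} = cls (x @ y)"
  proof (rule Set.set_eqI)
    fix w
    show "w \<in> {w. \<exists>a\<in>cls x. \<exists>b\<in>cls y. E (a @ b) w} \<longleftrightarrow> w \<in> cls (x @ y)"
    proof
      assume "w \<in> {w. \<exists>a\<in>cls x. \<exists>b\<in>cls y. E (a @ b) w}"
      then obtain a b where "E x a" "E y b" "E (a @ b) w" using cls_mem by auto
      thus "w \<in> cls (x @ y)" using key E_trans cls_mem by blast
    next
      assume "w \<in> cls (x @ y)"
      moreover have "x \<in> cls x" "y \<in> cls y" using E_refl x y cls_mem by auto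
      ultimately show "w \<in> {w. \<exists>a\<in>cls x. \<exists>b\<in>cls y. E (a @ b) w}" using cls_mem by auto
    qed
  qed
  thus ?thesis by (simp add: HNN_def)
qed

lemma carrier_HNN: "carrier (HNN G H \<theta>) = cls ` W" by (simp add: HNN_def)
lemma one_HNN: "\<one>\<^bsub>HNN G H \<theta>\<^esub> = cls []" by (simp add: HNN_def)

primrec invl :: "'a hnn_letter \<Rightarrow> 'a hnn_letter" where
  "invl (Inl g) = Inl (inv g)" | "invl (Inr b) = Inr (\<not> b)"

definition iw :: "'a hnn_letter list \<Rightarrow> 'a hnn_letter list" where
  "iw w = rev (map invl w)"

lemma iw_W: "x \<in> W \<Longrightarrow> iw x \<in> W"
  by (induction x) (auto simp: iw_def hnn_words_def)

lemma iw_E: "x \<in> W \<Longrightarrow> E (iw x @ x) []"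
proof (induction x)
  case Nil thus ?case by (simp add: iw_def E_refl)
next
  case (Cons a x)
  have xW: "x \<in> W" and aW: "[a] \<in> W" using Cons.prems by (auto simp: hnn_words_def)
  have ia: "E [invl a, a] []"
  proof (cases a)
    case (Inl g)
    hence g: "g \<in> carrier G" using aW by simp
    have "st ([] @ [Inl (inv g), Inl g] @ []) ([] @ [Inl (inv g \<otimes> g)] @ [])" using g by (intro hnn_step.mult) auto
    hence 1: "E [Inl (inv g), Inl g] [Inl \<one>]" using g by (simp add: E_step)
    have "st ([] @ [Inl \<one>] @ []) ([] @ [])" by (intro hnn_step.one) auto
    hence 2: "E [Inl \<one>] []" by (simp add: E_step)
    show ?thesis using 1 2 E_trans Inl by simp
  next
    case (Inr b)
    show ?thesis
    proof (cases b)
      case True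
      have "st ([] @ [Inr False, Inr True] @ []) ([] @ [])" by (intro hnn_step.inv_tau) auto
      thus ?thesis using Inr True by (simp add: E_step)
    next
      case False
      have "st ([] @ [Inr True, Inr False] @ []) ([] @ [])" by (intro hnn_step.tau_inv) auto
      thus ?thesis using Inr False by (simp add: E_step)
    qed
  qed
  have "E (iw x @ [invl a, a] @ x) (iw x @ [] @ x)" using E_cong[OF ia iw_W[OF xW] xW] .
  hence "E (iw (a # x) @ (a # x)) (iw x @ x)" by (simp add: iw_def)
  thus ?case using Cons.IH[OF xW] E_trans by blast
qed

lemma grp: "group (HNN G H \<theta>)"
proof (rule groupI)
  fix x y assume "x \<in> carrier (HNN G H \<theta>)" "y \<in> carrier (HNN G H \<theta>)"
  then obtain a b where "a \<in> W" "b \<in> W" "x = cls a" "y = cls b" by (auto simp: carrier_HNN)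
  thus "x \<otimes>\<^bsub>HNN G H \<theta>\<^esub> y \<in> carrier (HNN G H \<theta>)" by (simp add: mult_cls carrier_HNN)
next
  show "\<one>\<^bsub>HNN G H \<theta>\<^esub> \<in> carrier (HNN G H \<theta>)" by (simp add: carrier_HNN one_HNN)
next
  fix x y z assume "x \<in> carrier (HNN G H \<theta>)" "y \<in> carrier (HNN G H \<theta>)" "z \<in> carrier (HNN G H \<theta>)"
  then obtain a b c where "a \<in> W" "b \<in> W" "c \<in> W" "x = cls a" "y = cls b" "z = cls c" by (auto simp: carrier_HNN)
  thus "x \<otimes>\<^bsub>HNN G H \<theta>\<^esub> y \<otimes>\<^bsub>HNN G H \<theta>\<^esub> z = x \<otimes>\<^bsub>HNN G H \<theta>\<^esub> (y \<otimes>\<^bsub>HNN G H \<theta>\<^esub> z)"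
    by (simp add: mult_cls)
next
  fix x assume "x \<in> carrier (HNN G H \<theta>)"
  then obtain a where "a \<in> W" "x = cls a" by (auto simp: carrier_HNN)
  thus "\<one>\<^bsub>HNN G H \<theta>\<^esub> \<otimes>\<^bsub>HNN G H \<theta>\<^esub> x = x" by (simp add: mult_cls one_HNN)
next
  fix x assume "x \<in> carrier (HNN G H \<theta>)"
  then obtain a where a: "a \<in> W" "x = cls a" by (auto simp: carrier_HNN)
  have "cls (iw a) \<otimes>\<^bsub>HNN G H \<theta>\<^esub> x = cls []"
    using a mult_cls[OF iw_W[OF a(1)] a(1)] cls_eq[of "iw a @ a" "[]"] iw_E[OF a(1)] iw_W[OF a(1)] by simp
  thus "\<exists>y\<in>carrier (HNN G H \<theta>). y \<otimes>\<^bsub>HNN G H \<theta>\<^esub> x = \<one>\<^bsub>HNN G H \<theta>\<^esub>"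
    using iw_W[OF a(1)] by (auto simp: carrier_HNN one_HNN)
qed


section \<open>Words of normal forms\<close>

primrec wdl :: "('a \<times> int) list \<Rightarrow> 'a \<Rightarrow> 'a hnn_letter list" where
  "wdl [] g = [Inl g]"
| "wdl (p # ps) g = Inl (fst p) # Inr (snd p = 1) # wdl ps g"

lemma wdl_W: "vl ps \<Longrightarrow> g \<in> carrier G \<Longrightarrow> wdl ps g \<in> W"
proof (induction ps)
  case Nil thus ?case by simp
next
  case (Cons p ps)
  have "snd p \<in> {-1,1}" "fst p \<in> S (- snd p)" "vl ps" using Cons.prems by auto
  moreover have "- snd p \<in> {-1,1}" using \<open>snd p \<in> {-1,1}\<close> by auto
  ultimately have "fst p \<in> carrier G" using S_carr by blast
  thus ?case using Cons \<open>vl ps\<close> by simp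
qed

lemma W2: "vl ps \<Longrightarrow> g \<in> carrier G \<Longrightarrow> AW (wdl ps g) ([], \<one>) = (ps, g)"
proof (induction ps)
  case Nil thus ?case by (simp add: L_def actn_def)
next
  case (Cons p ps)
  obtain g1 e1 where p: "p = (g1,e1)" by (cases p)
  have e1: "e1 \<in> {-1,1}" and g1S: "g1 \<in> S(-e1)" and vr: "vl ps"
    and red: "ps \<noteq> [] \<longrightarrow> fst (hd ps) = \<one> \<longrightarrow> e1 = snd (hd ps)" using Cons.prems(1) p by auto
  have me1: "-e1 \<in> {-1,1}" using e1 by auto
  have g1c: "g1 \<in> carrier G" using S_carr[OF me1 g1S] .
  have ee: "(if e1 = 1 then 1 else -1) = e1" using e1 by auto
  have nc: "\<not> (ps \<noteq> [] \<and> fst (hd ps) = \<one> \<and> snd (hd ps) = - e1)" using red e1 by auto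
  have t: "tact e1 (ps, g) = ((\<one>, e1) # ps, g)" using nc unfolding tact_def by auto
  have r: "rep (-e1) g1 = g1" "hp (-e1) g1 = \<one>" using rep_S[OF me1 g1S] by auto
  have a: "actl ps \<one> g = (ps, g)" using act_one[OF vr Cons.prems(2)] .
  show ?case using Cons.IH[OF vr Cons.prems(2)] p t ee g1c r phi_one a by (simp add: L_def actn_def)
qed

lemma Rel: assumes e1: "e1 \<in> {-1,1}" and h: "h \<in> HH (-e1)"
  shows "E [Inr (e1 = 1), Inl (phi e1 h)] [Inl h, Inr (e1 = 1)]"
proof (cases "e1 = 1")
  case True
  hence hH: "h \<in> H" using h by (simp add: hnn_H_def)
  have hc: "h \<in> carrier G" using hH H_carr by blast
  have "st ([] @ [Inr True, Inr False] @ [Inl h, Inr True]) ([] @ [Inl h, Inr True])"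
    using hc by (intro hnn_step.tau_inv) auto
  hence 1: "E [Inl h, Inr True] [Inr True, Inr False, Inl h, Inr True]" by (simp add: E_step')
  have "st ([Inr True] @ [Inr False, Inl h, Inr True] @ []) ([Inr True] @ [Inl (\<theta> h)] @ [])"
    using hH by (intro hnn_step.conj) auto
  hence 2: "E [Inr True, Inr False, Inl h, Inr True] [Inr True, Inl (\<theta> h)]" by (simp add: E_step)
  have "E [Inl h, Inr True] [Inr True, Inl (\<theta> h)]" using E_trans[OF 1 2] .
  thus ?thesis using True by (simp add: phi_def E_sym)
next
  case False
  hence "e1 = -1" using e1 by auto
  then obtain a where a: "a \<in> H" "h = \<theta> a" using h by (auto simp: hnn_H_def)
  have ac: "a \<in> carrier G" using a H_carr by blast
  have ph: "phi e1 h = a" using False a inv_into_f_f[OF inj\<theta> a(1)] by (simp add: phi_def)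
  have "st ([] @ [Inr False, Inl a, Inr True] @ [Inr False]) ([] @ [Inl (\<theta> a)] @ [Inr False])"
    using a by (intro hnn_step.conj) auto
  hence 1: "E [Inl (\<theta> a), Inr False] [Inr False, Inl a, Inr True, Inr False]" by (simp add: E_step')
  have "st ([Inr False, Inl a] @ [Inr True, Inr False] @ []) ([Inr False, Inl a] @ [])"
    using ac by (intro hnn_step.tau_inv) auto
  hence 2: "E [Inr False, Inl a, Inr True, Inr False] [Inr False, Inl a]" by (simp add: E_step)
  have "E [Inl (\<theta> a), Inr False] [Inr False, Inl a]" using E_trans[OF 1 2] .
  thus ?thesis using False ph a by (simp add: E_sym)
qed

lemma act_word: "vl ps \<Longrightarrow> g \<in> carrier G \<Longrightarrow> x \<in> carrier G \<Longrightarrow>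
   E (wdl (fst (actl ps x g)) (snd (actl ps x g))) (Inl x # wdl ps g)"
proof (induction ps arbitrary: x)
  case Nil
  have "st ([] @ [Inl x, Inl g] @ []) ([] @ [Inl (x \<otimes> g)] @ [])" using Nil by (intro hnn_step.mult) auto
  thus ?case by (simp add: E_step')
next
  case (Cons p rest)
  obtain g1 e1 where p: "p = (g1,e1)" by (cases p)
  have e1: "e1 \<in> {-1,1}" and g1S: "g1 \<in> S(-e1)" and vr: "vl rest" using Cons.prems(1) p by auto
  have me1: "-e1 \<in> {-1,1}" using e1 by auto
  have g1c: "g1 \<in> carrier G" using S_carr[OF me1 g1S] .
  define y where "y = x \<otimes> g1"
  have yc: "y \<in> carrier G" using Cons.prems g1c y_def by simp
  define s where "s = rep (-e1) y"
  define h where "h = hp (-e1) y"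
  have sS: "s \<in> S (-e1)" using rep_ex[OF me1 yc] s_def by blast
  have sc: "s \<in> carrier G" using S_carr[OF me1 sS] .
  have hH: "h \<in> HH (-e1)" using hp_H(1)[OF me1 yc] h_def by simp
  have hc: "h \<in> carrier G" using HH_carr[OF me1 hH] .
  have ysh: "s \<otimes> h = y" using hp_H(2)[OF me1 yc] s_def h_def by simp
  define x' where "x' = phi e1 h"
  have x'c: "x' \<in> carrier G" using phi_carr[OF e1 hH] x'_def by simp
  define b where "b = (e1 = 1)"
  have wr: "wdl rest g \<in> W" using wdl_W[OF vr Cons.prems(2)] .
  have wr': "wdl (fst (actl rest x' g)) (snd (actl rest x' g)) \<in> W"
    using act_valid[OF vr Cons.prems(2) x'c] wdl_W by blast
  have lhs: "wdl (fst (actl (p # rest) x g)) (snd (actl (p # rest) x g)) =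
     [Inl s, Inr b] @ wdl (fst (actl rest x' g)) (snd (actl rest x' g))"
    by (simp add: p s_def h_def x'_def y_def b_def)
  have 1: "E ([Inl s, Inr b] @ wdl (fst (actl rest x' g)) (snd (actl rest x' g)) @ [])
              ([Inl s, Inr b] @ (Inl x' # wdl rest g) @ [])"
    using E_cong[OF Cons.IH[OF vr Cons.prems(2) x'c], of "[Inl s, Inr b]" "[]"] sc by simp
  have R: "E [Inr b, Inl x'] [Inl h, Inr b]" using Rel[OF e1 hH] x'_def b_def by simp
  have 2: "E ([Inl s] @ [Inr b, Inl x'] @ wdl rest g) ([Inl s] @ [Inl h, Inr b] @ wdl rest g)"
    using E_cong[OF R _ wr, of "[Inl s]"] sc by simp
  have "st ([] @ [Inl s, Inl h] @ (Inr b # wdl rest g)) ([] @ [Inl (s \<otimes> h)] @ (Inr b # wdl rest g))"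
    using sc hc wr by (intro hnn_step.mult) auto
  hence 3: "E (Inl s # Inl h # Inr b # wdl rest g) (Inl y # Inr b # wdl rest g)" using ysh by (simp add: E_step)
  have "st ([] @ [Inl x, Inl g1] @ (Inr b # wdl rest g)) ([] @ [Inl (x \<otimes> g1)] @ (Inr b # wdl rest g))"
    using Cons.prems g1c wr by (intro hnn_step.mult) auto
  hence 4: "E (Inl y # Inr b # wdl rest g) (Inl x # Inl g1 # Inr b # wdl rest g)" using y_def by (simp add: E_step')
  have "E ([Inl s, Inr b] @ wdl (fst (actl rest x' g)) (snd (actl rest x' g))) (Inl x # Inl g1 # Inr b # wdl rest g)"
    using E_trans[OF E_trans[OF E_trans[OF 1[simplified] 2[simplified]] 3] 4] by simp
  thus ?case using lhs p b_def by simp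
qed

lemma tact_word: assumes e: "e \<in> {-1,1}" and v: "vl ps" and g: "g \<in> carrier G"
  shows "E (wdl (fst (tact e (ps,g))) (snd (tact e (ps,g)))) (Inr (e = 1) # wdl ps g)"
proof (cases "ps \<noteq> [] \<and> fst (hd ps) = \<one> \<and> snd (hd ps) = -e")
  case True
  then obtain r where ps: "ps = (\<one>, -e) # r" by (cases ps) auto
  have vr: "vl r" using v ps by simp
  have wr: "wdl r g \<in> W" using wdl_W[OF vr g] .
  have t: "tact e (ps,g) = (r, g)" using True by (simp add: tact_def ps)
  have "st ([Inr (e = 1)] @ [Inl \<one>] @ (Inr (-e = 1) # wdl r g)) ([Inr (e = 1)] @ (Inr (-e = 1) # wdl r g))"
    using wr by (intro hnn_step.one) auto
  hence 1: "E (Inr (e = 1) # Inl \<one> # Inr (-e = 1) # wdl r g) (Inr (e = 1) # Inr (-e = 1) # wdl r g)"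
    by (simp add: E_step)
  have 2: "E (Inr (e = 1) # Inr (-e = 1) # wdl r g) (wdl r g)"
  proof (cases "e = 1")
    case True
    have "st ([] @ [Inr True, Inr False] @ wdl r g) ([] @ wdl r g)" using wr by (intro hnn_step.tau_inv) auto
    thus ?thesis using True by (simp add: E_step)
  next
    case False
    hence "-e = 1" using e by auto
    have "st ([] @ [Inr False, Inr True] @ wdl r g) ([] @ wdl r g)" using wr by (intro hnn_step.inv_tau) auto
    thus ?thesis using False \<open>-e = 1\<close> by (simp add: E_step)
  qed
  have "E (wdl r g) (Inr (e = 1) # Inl \<one> # Inr (-e = 1) # wdl r g)" using E_sym[OF E_trans[OF 1 2]] .
  thus ?thesis using t ps by simp
next
  case False
  have t: "tact e (ps,g) = ((\<one>, e) # ps, g)" using False unfolding tact_def by auto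
  have wr: "wdl ps g \<in> W" using wdl_W[OF v g] .
  have "st ([] @ [Inl \<one>] @ (Inr (e = 1) # wdl ps g)) ([] @ (Inr (e = 1) # wdl ps g))"
    using wr by (intro hnn_step.one) auto
  thus ?thesis using t by (simp add: E_step)
qed

definition wd :: "('a \<times> int) list \<times> 'a \<Rightarrow> 'a hnn_letter list" where
  "wd nf = wdl (fst nf) (snd nf)"

lemma L_word: "[l] \<in> W \<Longrightarrow> valid nf \<Longrightarrow> E (wd (L l nf)) (l # wd nf)"
proof (cases l)
  case (Inl x)
  assume "[l] \<in> W" "valid nf"
  thus ?thesis using Inl act_word[of "fst nf" "snd nf" x] by (simp add: L_def actn_def valid_def wd_def)
next
  case (Inr b)
  assume "valid nf"
  have e: "(if b then 1 else -1::int) \<in> {-1,1}" by auto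
  have "((if b then 1 else -1::int) = 1) = b" by auto
  thus ?thesis using Inr \<open>valid nf\<close> tact_word[OF e, of "fst nf" "snd nf"]
    by (simp add: L_def valid_def wd_def)
qed

lemma AW_word: "w \<in> W \<Longrightarrow> E (wd (AW w ([], \<one>))) (w @ [Inl \<one>])"
proof (induction w)
  case Nil thus ?case by (simp add: wd_def E_refl)
next
  case (Cons a w)
  have aW: "[a] \<in> W" and wW: "w \<in> W" using Cons.prems by (auto simp: hnn_words_def)
  have v: "valid (AW w ([], \<one>))" using AW_valid[OF wW] by (simp add: valid_def)
  have 1: "E (wd (L a (AW w ([], \<one>)))) (a # wd (AW w ([], \<one>)))" using L_word[OF aW v] .
  have 2: "E (a # wd (AW w ([], \<one>))) (a # w @ [Inl \<one>])" using E_consL[OF Cons.IH[OF wW] aW] .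
  show ?case using E_trans[OF 1 2] by simp
qed

lemma AW_cls: "w \<in> W \<Longrightarrow> cls (wd (AW w ([], \<one>))) = cls w"
proof -
  assume wW: "w \<in> W"
  have "st (w @ [Inl \<one>] @ []) (w @ [])" using wW by (intro hnn_step.one) auto
  hence "E (w @ [Inl \<one>]) w" by (simp add: E_step)
  hence e: "E (wd (AW w ([], \<one>))) w" using E_trans[OF AW_word[OF wW]] by blast
  thus ?thesis using cls_eq E_W[OF e] by blast
qed


section \<open>Normal forms\<close>

lemma vl_idx: "vl ps \<longleftrightarrow> (\<forall>i<length ps. snd (ps!i) \<in> {-1,1} \<and> fst (ps!i) \<in> S (- snd (ps!i)))
   \<and> (\<forall>i. 0 < i \<and> i < length ps \<longrightarrow> fst (ps!i) = \<one> \<longrightarrow> snd (ps!(i-1)) = snd (ps!i))"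
proof (induction ps)
  case Nil thus ?case by simp
next
  case (Cons p ps)
  have A: "(\<forall>i<length (p#ps). snd ((p#ps)!i) \<in> {-1,1} \<and> fst ((p#ps)!i) \<in> S (- snd ((p#ps)!i)))
     \<longleftrightarrow> (snd p \<in> {-1,1} \<and> fst p \<in> S (- snd p)) \<and> (\<forall>i<length ps. snd (ps!i) \<in> {-1,1} \<and> fst (ps!i) \<in> S (- snd (ps!i)))"
    by (simp only: length_Cons All_less_Suc2 nth_Cons_0 nth_Cons_Suc)
  have B: "(\<forall>i. 0 < i \<and> i < length (p#ps) \<longrightarrow> fst ((p#ps)!i) = \<one> \<longrightarrow> snd ((p#ps)!(i-1)) = snd ((p#ps)!i))
     \<longleftrightarrow> (ps \<noteq> [] \<longrightarrow> fst (hd ps) = \<one> \<longrightarrow> snd p = snd (hd ps))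
        \<and> (\<forall>i. 0 < i \<and> i < length ps \<longrightarrow> fst (ps!i) = \<one> \<longrightarrow> snd (ps!(i-1)) = snd (ps!i))"
  proof
    assume a: "\<forall>i. 0 < i \<and> i < length (p#ps) \<longrightarrow> fst ((p#ps)!i) = \<one> \<longrightarrow> snd ((p#ps)!(i-1)) = snd ((p#ps)!i)"
    show "(ps \<noteq> [] \<longrightarrow> fst (hd ps) = \<one> \<longrightarrow> snd p = snd (hd ps))
        \<and> (\<forall>i. 0 < i \<and> i < length ps \<longrightarrow> fst (ps!i) = \<one> \<longrightarrow> snd (ps!(i-1)) = snd (ps!i))"
    proof (intro conjI allI impI)
      assume "ps \<noteq> []" "fst (hd ps) = \<one>"
      thus "snd p = snd (hd ps)" using a[rule_format, of 1] by (simp add: hd_conv_nth)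
    next
      fix i assume i: "0 < i \<and> i < length ps" "fst (ps!i) = \<one>"
      have "snd ((p#ps)!(Suc i - 1)) = snd ((p#ps)!Suc i)" using a[rule_format, of "Suc i"] i by simp
      thus "snd (ps!(i-1)) = snd (ps!i)" using i by (cases i) auto
    qed
  next
    assume a: "(ps \<noteq> [] \<longrightarrow> fst (hd ps) = \<one> \<longrightarrow> snd p = snd (hd ps))
        \<and> (\<forall>i. 0 < i \<and> i < length ps \<longrightarrow> fst (ps!i) = \<one> \<longrightarrow> snd (ps!(i-1)) = snd (ps!i))"
    show "\<forall>i. 0 < i \<and> i < length (p#ps) \<longrightarrow> fst ((p#ps)!i) = \<one> \<longrightarrow> snd ((p#ps)!(i-1)) = snd ((p#ps)!i)"
    proof (intro allI impI)
      fix i assume i: "0 < i \<and> i < length (p#ps)" "fst ((p#ps)!i) = \<one>"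
      then obtain j where j: "i = Suc j" by (cases i) auto
      show "snd ((p#ps)!(i-1)) = snd ((p#ps)!i)"
      proof (cases j)
        case 0 thus ?thesis using a i j by (cases ps) auto
      next
        case (Suc k) thus ?thesis using a i j by auto
      qed
    qed
  qed
  have "vl (p # ps) \<longleftrightarrow> (snd p \<in> {-1,1} \<and> fst p \<in> S (- snd p)) \<and> vl ps \<and>
      (ps \<noteq> [] \<longrightarrow> fst (hd ps) = \<one> \<longrightarrow> snd p = snd (hd ps))" by auto
  thus ?case unfolding A B Cons.IH by blast
qed

lemma nf_valid_iff: "nf_valid G S nf \<longleftrightarrow> valid nf"
  unfolding nf_valid_def valid_def Let_def vl_idx by blast

abbreviation Gam where "Gam \<equiv> HNN G H \<theta>"

lemma taupow: "e \<in> {-1,1} \<Longrightarrow> hnn_tau_pow G H \<theta> e = cls [Inr (e = 1)]"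
proof -
  assume e: "e \<in> {-1,1}"
  show ?thesis
  proof (cases "e = 1")
    case True thus ?thesis by (simp add: hnn_tau_pow_def hnn_tau_def)
  next
    case False
    have "st ([] @ [Inr False, Inr True] @ []) ([] @ [])" by (intro hnn_step.inv_tau) auto
    hence "E [Inr False, Inr True] []" by (simp add: E_step)
    hence "cls [Inr False, Inr True] = cls []" using cls_eq[of "[Inr False, Inr True]" "[]"] by simp
    hence m: "cls [Inr False] \<otimes>\<^bsub>Gam\<^esub> cls [Inr True] = \<one>\<^bsub>Gam\<^esub>" using mult_cls[of "[Inr False]" "[Inr True]"] one_HNN by simp
    have c: "cls [Inr True] \<in> carrier Gam" "cls [Inr False] \<in> carrier Gam" unfolding carrier_HNN
      by (auto intro!: imageI)
    have "inv\<^bsub>Gam\<^esub> (cls [Inr True]) = cls [Inr False]" using group.inv_equality[OF grp m c] .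
    thus ?thesis using False by (simp add: hnn_tau_pow_def hnn_tau_def)
  qed
qed

lemma EV: "vl ps \<Longrightarrow> g \<in> carrier G \<Longrightarrow> nf_eval G H \<theta> (ps, g) = cls (wdl ps g)"
proof -
  assume v: "vl ps" and g: "g \<in> carrier G"
  have "foldr (\<lambda>(g, e) acc. hnn_emb G H \<theta> g \<otimes>\<^bsub>Gam\<^esub> hnn_tau_pow G H \<theta> e \<otimes>\<^bsub>Gam\<^esub> acc) ps (hnn_emb G H \<theta> g)
        = cls (wdl ps g)" using v
  proof (induction ps)
    case Nil thus ?case by (simp add: hnn_emb_def)
  next
    case (Cons p ps)
    obtain g1 e1 where p: "p = (g1,e1)" by (cases p)
    have e1: "e1 \<in> {-1,1}" and g1S: "g1 \<in> S(-e1)" and vr: "vl ps" using Cons.prems p by auto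
    have me1: "-e1 \<in> {-1,1}" using e1 by auto
    have g1c: "g1 \<in> carrier G" using S_carr[OF me1 g1S] .
    have wW: "wdl ps g \<in> W" using wdl_W[OF vr g] .
    have "hnn_emb G H \<theta> g1 \<otimes>\<^bsub>Gam\<^esub> hnn_tau_pow G H \<theta> e1 \<otimes>\<^bsub>Gam\<^esub> cls (wdl ps g)
        = cls ([Inl g1] @ [Inr (e1 = 1)] @ wdl ps g)"
      using taupow[OF e1] mult_cls[of "[Inl g1]" "[Inr (e1 = 1)]"] mult_cls[of "[Inl g1, Inr (e1 = 1)]" "wdl ps g"] g1c wW
      by (simp add: hnn_emb_def)
    thus ?case using Cons.IH[OF vr] p by simp
  qed
  thus ?thesis by (simp add: nf_eval_def)
qed

lemma n0_valid: "valid ([], \<one>)" by (simp add: valid_def)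

lemma NF: "w \<in> W \<Longrightarrow> normal_form G H \<theta> S (cls w) = AW w ([], \<one>)"
proof -
  assume wW: "w \<in> W"
  define n where "n = AW w ([], \<one>)"
  have vn: "valid n" using AW_valid[OF wW n0_valid] n_def by simp
  have P: "nf_valid G S n \<and> nf_eval G H \<theta> n = cls w"
  proof
    show "nf_valid G S n" using vn nf_valid_iff by simp
    obtain ps g where pg: "n = (ps, g)" by (cases n)
    have "nf_eval G H \<theta> (ps, g) = cls (wdl ps g)" using EV vn pg by (simp add: valid_def)
    moreover have "cls (wdl ps g) = cls w" using AW_cls[OF wW] n_def[symmetric] pg by (simp add: wd_def)
    ultimately show "nf_eval G H \<theta> n = cls w" using pg by simp
  qed
  have U: "nf = n" if "nf_valid G S nf \<and> nf_eval G H \<theta> nf = cls w" for nf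
  proof -
    obtain ps g where nf: "nf = (ps, g)" by (cases nf)
    have v: "vl ps" "g \<in> carrier G" using that nf nf_valid_iff by (auto simp: valid_def)
    have "cls (wdl ps g) = cls w" using that nf EV[OF v] by simp
    hence "E (wdl ps g) w" using cls_eq wdl_W[OF v] wW by blast
    hence "(symclp st)\<^sup>*\<^sup>* (wdl ps g) w" by (simp add: hnn_eq_def)
    hence "AW (wdl ps g) ([], \<one>) = AW w ([], \<one>)" using eq_AW n0_valid by blast
    thus ?thesis using W2[OF v] nf n_def by simp
  qed
  show ?thesis unfolding normal_form_def n_def[symmetric] using P U by (rule the_equality)
qed

lemma Td: "w \<in> W \<Longrightarrow> cls w \<in> hnn_T_dagger G H \<theta> S e \<longleftrightarrow>
   (fst (AW w ([], \<one>)) \<noteq> [] \<and> snd (hd (fst (AW w ([], \<one>)))) = e \<and> fst (hd (fst (AW w ([], \<one>)))) = \<one>)"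
  using NF[of w] by (auto simp: hnn_T_dagger_def hnn_T_def carrier_HNN)

lemma key: assumes e: "e \<in> {-1,1}" and a: "a \<in> carrier G" "a \<notin> HH e" and wW: "w \<in> W"
  and nT: "cls w \<notin> hnn_T_dagger G H \<theta> S e"
  shows "cls ([Inl a, Inr (-e = 1)] @ w) \<notin> hnn_T_dagger G H \<theta> S (-e)"
proof -
  define n where "n = AW w ([], \<one>)"
  have vn: "valid n" using AW_valid[OF wW n0_valid] n_def by simp
  have nc: "\<not> (fst n \<noteq> [] \<and> snd (hd (fst n)) = e \<and> fst (hd (fst n)) = \<one>)" using nT Td[OF wW] n_def by simp
  have ee: "(if -e = 1 then 1 else -1) = -e" using e by auto
  have t: "tact (-e) n = ((\<one>, -e) # fst n, snd n)" using nc unfolding tact_def by auto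
  have r: "rep e a \<noteq> \<one>" using rep_one_iff[OF e a(1)] a(2) by simp
  have aw: "AW ([Inl a, Inr (-e = 1)] @ w) ([], \<one>) = L (Inl a) (tact (-e) n)"
    using n_def ee by (simp add: L_def)
  have "fst (hd (fst (AW ([Inl a, Inr (-e = 1)] @ w) ([], \<one>)))) = rep e a"
    unfolding aw t using a(1) by (simp add: L_def actn_def)
  moreover have "[Inl a, Inr (-e = 1)] @ w \<in> W" using a wW by simp
  ultimately show ?thesis using Td[of "[Inl a, Inr (-e = 1)] @ w" "-e"] r by auto
qed

lemma emb_carr: "hnn_emb G H \<theta> ` H \<subseteq> carrier Gam"
  using H_carr by (auto simp: hnn_emb_def carrier_HNN)

lemma conj_carr: "r \<in> carrier Gam \<Longrightarrow> conj_set Gam r (hnn_emb G H \<theta> ` H) \<subseteq> carrier Gam"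
proof -
  assume r: "r \<in> carrier Gam"
  interpret Gm: group Gam by (rule grp)
  show ?thesis using r emb_carr unfolding conj_set_def by auto
qed

lemma one_notT: "\<one>\<^bsub>Gam\<^esub> \<in> carrier Gam - hnn_T_dagger G H \<theta> S e"
  using Td[of "[]" e] by (simp add: one_HNN carrier_HNN)

lemma QK_carr: "quasi_kernel G H \<theta> S e \<subseteq> carrier Gam"
proof -
  have "quasi_kernel G H \<theta> S e \<subseteq> conj_set Gam \<one>\<^bsub>Gam\<^esub> (hnn_emb G H \<theta> ` H)"
    unfolding quasi_kernel_def using one_notT by blast
  thus ?thesis using conj_carr[of "\<one>\<^bsub>Gam\<^esub>"] group.is_monoid[OF grp] monoid.one_closed by blast
qed

lemma QK: assumes e: "e \<in> {-1,1}"
  shows "\<exists>c\<in>carrier Gam. quasi_kernel G H \<theta> S (-e) \<subseteq> conj_set Gam c (quasi_kernel G H \<theta> S e)"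
proof -
  interpret Gm: group Gam by (rule grp)
  have "HH e \<subseteq> carrier G" using HH_carr[OF e] by blast
  moreover have "HH e \<noteq> carrier G" using nonasc e by (auto simp: non_ascending_def hnn_H_def)
  ultimately obtain a where a: "a \<in> carrier G" "a \<notin> HH e" by blast
  define c where "c = cls [Inl a, Inr (-e = 1)]"
  have cc: "c \<in> carrier Gam" using a unfolding c_def carrier_HNN by (auto intro!: imageI)
  have cr: "c \<otimes>\<^bsub>Gam\<^esub> r \<in> carrier Gam - hnn_T_dagger G H \<theta> S (-e)"
    if r: "r \<in> carrier Gam - hnn_T_dagger G H \<theta> S e" for r
  proof -
    obtain w where w: "w \<in> W" "r = cls w" using r by (auto simp: carrier_HNN)
    have m: "c \<otimes>\<^bsub>Gam\<^esub> r = cls ([Inl a, Inr (-e = 1)] @ w)" using mult_cls[of "[Inl a, Inr (-e = 1)]" w] a w c_def by simp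
    have "cls ([Inl a, Inr (-e = 1)] @ w) \<notin> hnn_T_dagger G H \<theta> S (-e)" using key[OF e a w(1)] r w by simp
    moreover have "c \<otimes>\<^bsub>Gam\<^esub> r \<in> carrier Gam" using Gm.m_closed[OF cc] r by blast
    ultimately show ?thesis unfolding m by blast
  qed
  have "quasi_kernel G H \<theta> S (-e) \<subseteq> conj_set Gam c (quasi_kernel G H \<theta> S e)"
  proof
    fix k assume k: "k \<in> quasi_kernel G H \<theta> S (-e)"
    have kc: "k \<in> carrier Gam" using k QK_carr by blast
    define k' where "k' = inv\<^bsub>Gam\<^esub> c \<otimes>\<^bsub>Gam\<^esub> k \<otimes>\<^bsub>Gam\<^esub> c"
    have "k' \<in> conj_set Gam r (hnn_emb G H \<theta> ` H)" if r: "r \<in> carrier Gam - hnn_T_dagger G H \<theta> S e" for r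
    proof -
      have "k \<in> conj_set Gam (c \<otimes>\<^bsub>Gam\<^esub> r) (hnn_emb G H \<theta> ` H)" using k cr[OF r] unfolding quasi_kernel_def by blast
      then obtain u where u: "u \<in> hnn_emb G H \<theta> ` H" "k = (c \<otimes>\<^bsub>Gam\<^esub> r) \<otimes>\<^bsub>Gam\<^esub> u \<otimes>\<^bsub>Gam\<^esub> inv\<^bsub>Gam\<^esub> (c \<otimes>\<^bsub>Gam\<^esub> r)"
        unfolding conj_set_def by blast
      have uc: "u \<in> carrier Gam" using u emb_carr by blast
      have rc: "r \<in> carrier Gam" using r by blast
      have "k' = r \<otimes>\<^bsub>Gam\<^esub> u \<otimes>\<^bsub>Gam\<^esub> inv\<^bsub>Gam\<^esub> r" unfolding k'_def u(2) using Gm.conj1[OF cc rc uc] .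
      thus ?thesis using u unfolding conj_set_def by blast
    qed
    hence "k' \<in> quasi_kernel G H \<theta> S e" unfolding quasi_kernel_def by blast
    moreover have "k = c \<otimes>\<^bsub>Gam\<^esub> k' \<otimes>\<^bsub>Gam\<^esub> inv\<^bsub>Gam\<^esub> c" unfolding k'_def using Gm.conj2[OF cc kc] by simp
    ultimately show "k \<in> conj_set Gam c (quasi_kernel G H \<theta> S e)" unfolding conj_set_def by blast
  qed
  thus ?thesis using cc by blast
qed

lemma U_sub: assumes e: "e \<in> {-1,1}"
  shows "(\<Union>g\<in>carrier Gam. conj_set Gam g (quasi_kernel G H \<theta> S (-e)))
       \<subseteq> (\<Union>g\<in>carrier Gam. conj_set Gam g (quasi_kernel G H \<theta> S e))"
proof
  interpret Gm: group Gam by (rule grp)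
  obtain c where c: "c \<in> carrier Gam" "quasi_kernel G H \<theta> S (-e) \<subseteq> conj_set Gam c (quasi_kernel G H \<theta> S e)"
    using QK[OF e] by blast
  fix x assume "x \<in> (\<Union>g\<in>carrier Gam. conj_set Gam g (quasi_kernel G H \<theta> S (-e)))"
  then obtain g k where g: "g \<in> carrier Gam" "k \<in> quasi_kernel G H \<theta> S (-e)" "x = g \<otimes>\<^bsub>Gam\<^esub> k \<otimes>\<^bsub>Gam\<^esub> inv\<^bsub>Gam\<^esub> g"
    unfolding conj_set_def by blast
  then obtain k' where k': "k' \<in> quasi_kernel G H \<theta> S e" "k = c \<otimes>\<^bsub>Gam\<^esub> k' \<otimes>\<^bsub>Gam\<^esub> inv\<^bsub>Gam\<^esub> c"
    using c(2) unfolding conj_set_def by blast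
  have k'c: "k' \<in> carrier Gam" using k'(1) QK_carr by blast
  have "x = (g \<otimes>\<^bsub>Gam\<^esub> c) \<otimes>\<^bsub>Gam\<^esub> k' \<otimes>\<^bsub>Gam\<^esub> inv\<^bsub>Gam\<^esub> (g \<otimes>\<^bsub>Gam\<^esub> c)"
    using g(3) k'(2) Gm.conj3[OF g(1) c(1) k'c] by simp
  moreover have "g \<otimes>\<^bsub>Gam\<^esub> c \<in> carrier Gam" using g(1) c(1) by simp
  ultimately show "x \<in> (\<Union>g\<in>carrier Gam. conj_set Gam g (quasi_kernel G H \<theta> S e))"
    using k'(1) unfolding conj_set_def by blast
qed

lemma main: "normal_closure (HNN G H \<theta>) (quasi_kernel G H \<theta> S (-1))
       = normal_closure (HNN G H \<theta>) (quasi_kernel G H \<theta> S 1)"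
proof -
  have 1: "(\<Union>g\<in>carrier Gam. conj_set Gam g (quasi_kernel G H \<theta> S (-1)))
       \<subseteq> (\<Union>g\<in>carrier Gam. conj_set Gam g (quasi_kernel G H \<theta> S 1))" using U_sub[of 1] by simp
  have 2: "(\<Union>g\<in>carrier Gam. conj_set Gam g (quasi_kernel G H \<theta> S 1))
       \<subseteq> (\<Union>g\<in>carrier Gam. conj_set Gam g (quasi_kernel G H \<theta> S (-1)))" using U_sub[of "-1"] by simp
  show ?thesis unfolding normal_closure_def using 1 2 by (simp add: subset_antisym)
qed

end

theorem mainTheorem12:
  fixes G :: "('a, 'm) monoid_scheme" and H :: "'a set" and \<theta> :: "'a \<Rightarrow> 'a"
    and S :: "int \<Rightarrow> 'a set"
  assumes "group G"
    and "subgroup H G"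
    and "\<theta> \<in> hom (G\<lparr>carrier := H\<rparr>) G"
    and "inj_on \<theta> H"
    and "non_ascending G H \<theta>"
    and "left_transversal G (hnn_H H \<theta> (-1)) (S (-1))"
    and "left_transversal G (hnn_H H \<theta> 1) (S 1)"
    and "\<one>\<^bsub>G\<^esub> \<in> S (-1)" and "\<one>\<^bsub>G\<^esub> \<in> S 1"
  shows "normal_closure (HNN G H \<theta>) (quasi_kernel G H \<theta> S (-1))
       = normal_closure (HNN G H \<theta>) (quasi_kernel G H \<theta> S 1)"
proof -
  have "hnn_setup G H \<theta> S" unfolding hnn_setup_def hnn_setup_axioms_def using assms by blast
  thus ?thesis by (rule hnn_setup.main)
qed

end
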